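(* Consider $\min_u F(u)+G(u)$ under the assumptions below, and let $\{(y^t,z^t,x^t)\}$ be generated by the modified PR iteration with $\gamma\in(0,\frac{1}{12L_F})$. Then the sequence is bounded, and any cluster point $(\bar y,\bar z,\bar x)$ satisfies $\bar y=\bar z$ and $0\in\nabla F(\bar z)+\partial G(\bar z)$.
   Context: Assumptions: $F:\mathbb{R}^n\to\mathbb{R}$ is convex and differentiable with $\nabla F$ Lipschitz continuous with modulus at most $L_F>0$; $G:\mathbb{R}^n\to(-\infty,\infty]$ is proper, lower semicontinuous, and $\operatorname{Argmin}_u\{\tau G(u)+\frac12\|u-w\|^2\}$ is nonempty for every $w$ and every $\tau>0$; $F+G$ is coercive ($\liminf_{\|u\|\to\infty}(F+G)(u)=\infty$). Modified PR iteration: given $x^0$ and $\gamma\in(0,\frac1{12L_F})$, for $t=0,1,\dots$: $y^{t+1}=\operatorname{argmin}_y\{F(y)+\frac{5L_F}{2}\|y\|^2+\frac1{2\gamma}\|y-x^t\|^2\}$; $z^{t+1}\in\operatorname{Argmin}_z\{G(z)-\frac{5L_F}{2}\|z\|^2+\frac1{2\gamma}\|2y^{t+1}-x^t-z\|^2\}$; $x^{t+1}=x^t+2(z^{t+1}-y^{t+1})$. $\partial G$ is the limiting subdifferential: $v\in\partial G(x)$ iff there exist $x^t\to x$ with $G(x^t)\to G(x)$ and $v^t\to v$ such that $\liminf_{z\to x^t, z\ne x^t}\frac{G(z)-G(x^t)-\langle v^t,z-x^t\rangle}{\|z-x^t\|}\ge0$ for each $t$. *)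

theory Defs
  imports "HOL-Analysis.Analysis"
begin

text \<open>Extended-real-valued functions model maps into (-infinity, +infinity].\<close>

definition proper_fun :: "('a \<Rightarrow> ereal) \<Rightarrow> bool" where
  "proper_fun G \<longleftrightarrow> (\<forall>x. G x \<noteq> -\<infinity>) \<and> (\<exists>x. G x \<noteq> \<infinity>)"

definition lsc_fun :: "('a::topological_space \<Rightarrow> ereal) \<Rightarrow> bool" where
  "lsc_fun G \<longleftrightarrow> (\<forall>x. G x \<le> Liminf (at x) G)"

definition Argmin :: "('a \<Rightarrow> 'b::linorder) \<Rightarrow> 'a set" where
  "Argmin f = {x. \<forall>y. f x \<le> f y}"

definition frechet_subdiff :: "('a::euclidean_space \<Rightarrow> ereal) \<Rightarrow> 'a \<Rightarrow> 'a set" where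
  "frechet_subdiff G x = {v. \<bar>G x\<bar> \<noteq> \<infinity> \<and>
     Liminf (at x) (\<lambda>z. (G z - G x - ereal (v \<bullet> (z - x))) / ereal (norm (z - x))) \<ge> 0}"

definition limiting_subdiff :: "('a::euclidean_space \<Rightarrow> ereal) \<Rightarrow> 'a \<Rightarrow> 'a set" where
  "limiting_subdiff G x = {v. \<exists>xs vs. xs \<longlonglongrightarrow> x \<and> (\<lambda>t. G (xs t)) \<longlonglongrightarrow> G x \<and>
     vs \<longlonglongrightarrow> v \<and> (\<forall>t. vs t \<in> frechet_subdiff G (xs t))}"

end

theory Submission
  imports Defs
begin

lemma grad_ineq:
  fixes F :: "'a::euclidean_space \<Rightarrow> real"
  assumes cv: "convex_on UNIV F"
    and dF: "\<And>u. (F has_derivative (\<lambda>h. gradF u \<bullet> h)) (at u)"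
  shows "F u + gradF u \<bullet> (v - u) \<le> F v"
proof -
  define \<phi> where "\<phi> s = F (u + s *\<^sub>R (v - u))" for s :: real
  have "convex_on UNIV \<phi>"
  proof (rule convex_onI)
    fix t s1 s2 :: real assume t: "0 < t" "t < 1"
    have eq: "u + ((1 - t) * s1 + t * s2) *\<^sub>R (v - u) = (1 - t) *\<^sub>R (u + s1 *\<^sub>R (v - u)) + t *\<^sub>R (u + s2 *\<^sub>R (v - u))"
      by (simp add: algebra_simps)
    show "\<phi> ((1 - t) *\<^sub>R s1 + t *\<^sub>R s2) \<le> (1 - t) * \<phi> s1 + t * \<phi> s2"
      unfolding \<phi>_def using convex_onD[OF cv, of t] t by (simp add: eq)
  qed simp
  moreover have "(\<phi> has_field_derivative (gradF u \<bullet> (v - u))) (at 0 within UNIV)"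
  proof -
    have "((\<lambda>s. u + s *\<^sub>R (v - u)) has_derivative (\<lambda>s. s *\<^sub>R (v - u))) (at 0)"
      by (auto intro!: derivative_eq_intros)
    moreover have "(F has_derivative (\<lambda>h. gradF u \<bullet> h)) (at (u + 0 *\<^sub>R (v - u)))"
      using dF[of u] by simp
    ultimately have "(\<phi> has_derivative (\<lambda>s. gradF u \<bullet> (s *\<^sub>R (v - u)))) (at 0)"
      unfolding \<phi>_def by (rule has_derivative_compose)
    moreover have "(\<lambda>s. gradF u \<bullet> (s *\<^sub>R (v - u))) = (\<lambda>s. (gradF u \<bullet> (v - u)) * s)"
      by auto
    ultimately show ?thesis unfolding has_field_derivative_def
      by simp
  qed
  ultimately have "\<phi> 1 - \<phi> 0 \<ge> gradF u \<bullet> (v - u) * (1 - 0)"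
    by (intro convex_on_imp_above_tangent[where A=UNIV]) auto
  then show ?thesis unfolding \<phi>_def by simp
qed
lemma yopt:
  fixes F :: "'a::euclidean_space \<Rightarrow> real"
  assumes dF: "\<And>u. (F has_derivative (\<lambda>h. gradF u \<bullet> h)) (at u)"
    and g: "\<gamma> > 0"
    and y: "y \<in> Argmin (\<lambda>v. F v + c * (norm v)\<^sup>2 + (1 / (2 * \<gamma>)) * (norm (v - x))\<^sup>2)"
  shows "x = y + \<gamma> *\<^sub>R (gradF y + (2 * c) *\<^sub>R y)"
proof -
  define w where "w = gradF y + (2 * c) *\<^sub>R y + (1 / \<gamma>) *\<^sub>R (y - x)"
  have d: "((\<lambda>v. F v + c * (v \<bullet> v) + (1 / (2 * \<gamma>)) * ((v - x) \<bullet> (v - x))) has_derivative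
     (\<lambda>h. gradF y \<bullet> h + c * (h \<bullet> y + y \<bullet> h) + (1 / (2 * \<gamma>)) * (h \<bullet> (y - x) + (y - x) \<bullet> h))) (at y)"
    using g by (auto intro!: derivative_eq_intros dF simp: fun_eq_iff inner_commute field_simps)
  have "eventually (\<lambda>v. (\<lambda>v. F v + c * (v \<bullet> v) + (1 / (2 * \<gamma>)) * ((v - x) \<bullet> (v - x))) y
      \<le> (\<lambda>v. F v + c * (v \<bullet> v) + (1 / (2 * \<gamma>)) * ((v - x) \<bullet> (v - x))) v) (at y)"
    using y by (auto simp: Argmin_def power2_norm_eq_inner[symmetric])
  from has_derivative_local_min[OF d this]
  have "\<And>h. gradF y \<bullet> h + c * (h \<bullet> y + y \<bullet> h) + (1 / (2 * \<gamma>)) * (h \<bullet> (y - x) + (y - x) \<bullet> h) = 0"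
    by meson
  then have "w \<bullet> h = 0" for h
    unfolding w_def using g by (simp add: inner_commute algebra_simps inner_add_left)
  then have "w = 0" by (metis inner_eq_zero_iff)
  then have "\<gamma> *\<^sub>R w = 0" by simp
  then show ?thesis unfolding w_def using g by (simp add: algebra_simps)
qed

lemma upper_bound:
  fixes F :: "'a::euclidean_space \<Rightarrow> real"
  assumes cv: "convex_on UNIV F"
    and dF: "\<And>u. (F has_derivative (\<lambda>h. gradF u \<bullet> h)) (at u)"
    and lip: "\<And>u v. norm (gradF u - gradF v) \<le> L * norm (u - v)"
  shows "F w \<le> F u + gradF u \<bullet> (w - u) + L * (norm (w - u))\<^sup>2"
proof -
  have "F w + gradF w \<bullet> (u - w) \<le> F u" by (rule grad_ineq[OF cv dF])
  moreover have "(gradF w - gradF u) \<bullet> (w - u) \<le> norm (gradF w - gradF u) * norm (w - u)"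
    by (rule norm_cauchy_schwarz)
  moreover have "norm (gradF w - gradF u) * norm (w - u) \<le> L * norm (w - u) * norm (w - u)"
    using lip[of w u] by (simp add: mult_right_mono)
  moreover have "gradF w \<bullet> (u - w) = - (gradF w \<bullet> (w - u))"
    by (simp add: inner_diff_right)
  ultimately show ?thesis by (simp add: power2_eq_square inner_diff_left)
qed
lemma quad_ident:
  fixes w z p :: "'a::real_inner"
  shows "A * (norm z)\<^sup>2 - A * (norm w)\<^sup>2 - (B * (norm (p - z))\<^sup>2 - B * (norm (p - w))\<^sup>2)
     = ((2*A) *\<^sub>R w + (2*B) *\<^sub>R (p - w)) \<bullet> (z - w) + (A - B) * (norm (z - w))\<^sup>2"
  by (simp add: power2_norm_eq_inner inner_diff_left inner_diff_right inner_add_left inner_commute algebra_simps)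

lemma frechet_min:
  fixes G :: "'a::euclidean_space \<Rightarrow> ereal"
  assumes fin: "\<bar>G w\<bar> \<noteq> \<infinity>"
   and min: "\<And>v. G w - ereal (A * (norm w)\<^sup>2) + ereal (B * (norm (p - w))\<^sup>2)
              \<le> G v - ereal (A * (norm v)\<^sup>2) + ereal (B * (norm (p - v))\<^sup>2)"
  shows "(2*A) *\<^sub>R w + (2*B) *\<^sub>R (p - w) \<in> frechet_subdiff G w"
proof -
  define vv where "vv = (2*A) *\<^sub>R w + (2*B) *\<^sub>R (p - w)"
  define c where "c = \<bar>A - B\<bar> + 1"
  obtain gw where gw: "G w = ereal gw" using fin by (cases "G w") auto
  have key: "(A - B) * (norm (z - w))\<^sup>2 \<le> gz - gw - vv \<bullet> (z - w)" if gz: "G z = ereal gz" for z gz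
  proof -
    have "gw - A * (norm w)\<^sup>2 + B * (norm (p - w))\<^sup>2 \<le> gz - A * (norm z)\<^sup>2 + B * (norm (p - z))\<^sup>2"
      using min[of z] gw gz by simp
    then show ?thesis using quad_ident[of A z w B p] unfolding vv_def by linarith
  qed
  have pt: "ereal (- c * norm (z - w)) \<le> (G z - G w - ereal (vv \<bullet> (z - w))) / ereal (norm (z - w))"
    if "z \<noteq> w" for z
  proof -
    have n: "norm (z - w) > 0" using that by simp
    show ?thesis
    proof (cases "G z")
      case (real gz)
      have "(A - B) * (norm (z - w))\<^sup>2 \<le> gz - gw - vv \<bullet> (z - w)" using key[OF real] .
      moreover have "- c * (norm (z - w))\<^sup>2 \<le> (A - B) * (norm (z - w))\<^sup>2"
        unfolding c_def by (intro mult_right_mono) auto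
      ultimately have "- c * norm (z - w) \<le> (gz - gw - vv \<bullet> (z - w)) / norm (z - w)"
        using n by (simp add: pos_le_divide_eq power2_eq_square)
      then show ?thesis using real gw n by simp
    next
      case PInf
      then show ?thesis using gw n by simp
    next
      case MInf
      then have False using min[of z] gw by simp
      then show ?thesis ..
    qed
  qed
  have "Liminf (at w) (\<lambda>z. ereal (- c * norm (z - w))) = 0"
  proof -
    have "((\<lambda>z. - c * norm (z - w)) \<longlongrightarrow> - c * norm (w - w)) (at w)"
      by (intro tendsto_intros)
    then have "((\<lambda>z. ereal (- c * norm (z - w))) \<longlongrightarrow> ereal 0) (at w)" by simp
    then show ?thesis by (simp add: lim_imp_Liminf zero_ereal_def)
  qed
  moreover have "Liminf (at w) (\<lambda>z. ereal (- c * norm (z - w)))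
     \<le> Liminf (at w) (\<lambda>z. (G z - G w - ereal (vv \<bullet> (z - w))) / ereal (norm (z - w)))"
    by (intro Liminf_mono) (auto simp: eventually_at intro!: exI[of _ 1] dest!: pt)
  ultimately show ?thesis unfolding frechet_subdiff_def vv_def[symmetric] using fin by simp
qed
lemma lsc_nhds:
  fixes G :: "'a::euclidean_space \<Rightarrow> ereal"
  assumes "lsc_fun G" "c < G v"
  shows "eventually (\<lambda>w. c < G w) (nhds v)"
proof -
  have "G v \<le> Liminf (at v) G" using assms(1) unfolding lsc_fun_def by blast
  then have "eventually (\<lambda>w. c < G w) (at v)" using assms(2) le_Liminf_iff by blast
  then show ?thesis using assms(2) eventually_nhds_conv_at by blast
qed

lemma nhds_seq:
  assumes "eventually P (nhds v)" "s \<longlonglongrightarrow> v"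
  shows "eventually (\<lambda>n. P (s n)) sequentially"
  using assms filterlim_iff by blast

lemma lsc_sum_nhds:
  fixes G :: "'a::euclidean_space \<Rightarrow> ereal" and F :: "'a \<Rightarrow> real"
  assumes lsc: "lsc_fun G" and nm: "\<And>v. G v \<noteq> -\<infinity>" and cont: "continuous_on UNIV F"
    and c: "c < ereal (F v) + G v"
  shows "eventually (\<lambda>w. c < ereal (F w) + G w) (nhds v)"
proof (cases c)
  case MInf
  then show ?thesis using nm by (auto intro!: always_eventually)
next
  case PInf
  then show ?thesis using c by simp
next
  case (real c')
  obtain e where e: "e > 0" "ereal (c' - F v + e) < G v"
  proof (cases "G v")
    case (real gv)
    then show ?thesis using c \<open>c = ereal c'\<close>
      by (intro that[of "(gv - c' + F v)/2"]) (auto simp: field_simps)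
  next
    case PInf
    then show ?thesis by (intro that[of 1]) auto
  next
    case MInf
    then show ?thesis using nm by simp
  qed
  have e1: "eventually (\<lambda>w. ereal (c' - F v + e) < G w) (nhds v)"
    by (rule lsc_nhds[OF lsc e(2)])
  have "(F \<longlongrightarrow> F v) (at v)"
    using cont by (simp add: continuous_on_def)
  then have "eventually (\<lambda>w. dist (F w) (F v) < e) (at v)"
    using e(1) tendsto_iff by blast
  then have e2: "eventually (\<lambda>w. dist (F w) (F v) < e) (nhds v)"
    using e(1) by (simp add: eventually_nhds_conv_at)
  show ?thesis
  proof (rule eventually_mono[OF eventually_conj[OF e1 e2]])
    fix w assume w: "ereal (c' - F v + e) < G w \<and> dist (F w) (F v) < e"
    then have "F w > F v - e" by (simp add: dist_real_def abs_less_iff)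
    then have "ereal c' < ereal (F w) + ereal (c' - F v + e)" by simp
    also have "\<dots> \<le> ereal (F w) + G w" using w less_imp_le add_left_mono by blast
    finally show "c < ereal (F w) + G w" using real by simp
  qed
qed
lemma coercive_bdd_below:
  fixes H :: "'a::euclidean_space \<Rightarrow> ereal"
  assumes lsc: "\<And>v c. c < H v \<Longrightarrow> eventually (\<lambda>w. c < H w) (nhds v)"
    and nm: "\<And>v. H v \<noteq> -\<infinity>"
    and coer: "(H \<longlongrightarrow> \<infinity>) at_infinity"
  shows "\<exists>m::real. \<forall>v. ereal m \<le> H v"
proof (rule ccontr)
  assume "\<not> ?thesis"
  then have "\<forall>n::nat. \<exists>v. H v < ereal (- real n)" by (meson not_le)
  then obtain s where s: "\<And>n. H (s n) < ereal (- real n)" by metis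
  have "eventually (\<lambda>v. (0::ereal) < H v) at_infinity"
    using order_tendstoD(1)[OF coer] by simp
  then obtain R where R: "\<And>v. R \<le> norm v \<Longrightarrow> 0 < H v"
    unfolding eventually_at_infinity by blast
  have "s n \<in> cball 0 R" for n
  proof (rule ccontr)
    assume "s n \<notin> cball 0 R"
    then have "0 < H (s n)" using R by auto
    moreover have "ereal (- real n) \<le> 0" by (simp add: zero_ereal_def)
    ultimately show False using s[of n] by (meson less_le_not_le order.strict_trans order.trans)
  qed
  then obtain l r where lr: "strict_mono r" "(s \<circ> r) \<longlonglongrightarrow> l"
    using seq_compactE[OF compact_imp_seq_compact[OF compact_cball]] by metis
  obtain c :: real where c: "ereal c < H l"
  proof (cases "H l")
    case (real r) then show ?thesis by (intro that[of "r - 1"]) simp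
  next
    case PInf then show ?thesis by (intro that[of 0]) simp
  next
    case MInf then show ?thesis using nm[of l] by simp
  qed
  have "eventually (\<lambda>n. ereal c < H ((s \<circ> r) n)) sequentially"
    by (rule nhds_seq[OF lsc[OF c] lr(2)])
  moreover have "eventually (\<lambda>n. real n > - c) sequentially"
    by (rule eventually_sequentiallyI[of "nat (ceiling (- c)) + 1"]) linarith
  ultimately obtain n where n: "ereal c < H (s (r n))" "real n > - c"
    using eventually_happens[OF eventually_conj] by fastforce
  have "real n \<le> real (r n)" using seq_suble[OF lr(1)] by simp
  then have "H (s (r n)) < ereal c" using s[of "r n"] n(2)
    by (metis ereal_less_eq(3) le_less_trans less_le_not_le minus_le_iff order.strict_trans2 linorder_not_le) 
  with n(1) show False by simp
qed
lemma E1: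
  fixes u a w :: "'a::real_inner"
  assumes g: "\<gamma> > 0"
  shows "(a - (2*A) *\<^sub>R u) \<bullet> (w - u) + (1/(2*\<gamma>) - A) * (norm (w - u))\<^sup>2
    = A * (norm u)\<^sup>2 - (1/(2*\<gamma>)) * \<gamma>\<^sup>2 * (norm a)\<^sup>2 - A * (norm w)\<^sup>2 + (1/(2*\<gamma>)) * (norm (u - \<gamma> *\<^sub>R a - w))\<^sup>2"
  using g unfolding power2_norm_eq_inner by (simp add: inner_diff_left inner_diff_right inner_add_left inner_add_right inner_commute algebra_simps power2_eq_square field_simps)

lemma E2:
  fixes u d a e :: "'a::real_inner"
  assumes g: "\<gamma> > 0"
  shows "A * (norm (u + d))\<^sup>2 - (1/(2*\<gamma>)) * \<gamma>\<^sup>2 * (norm (a + e))\<^sup>2 - A * (norm (u + (1/2) *\<^sub>R (d + \<gamma> *\<^sub>R e)))\<^sup>2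
     + (1/(2*\<gamma>)) * (norm (u + d - \<gamma> *\<^sub>R (a + e) - (u + (1/2) *\<^sub>R (d + \<gamma> *\<^sub>R e))))\<^sup>2
     - (a - (2*A) *\<^sub>R u) \<bullet> ((1/2) *\<^sub>R (d + \<gamma> *\<^sub>R e))
     - (1/(2*\<gamma>) - A) * (norm ((1/2) *\<^sub>R (d + \<gamma> *\<^sub>R e)))\<^sup>2
     - (a + e - (2*A) *\<^sub>R (u + d)) \<bullet> (- d)
   = (\<gamma>/2) * (norm e)\<^sup>2 - A * (norm d)\<^sup>2"
  using g unfolding power2_norm_eq_inner by (simp add: inner_diff_left inner_diff_right inner_add_left inner_add_right inner_commute algebra_simps power2_eq_square field_simps)
lemma desc_step:
  fixes u u' w w' a a' q q' :: "'a::real_inner"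
  assumes g: "\<gamma> > 0" and Lp: "L > 0" and gL: "\<gamma> < 1 / (12 * L)"
    and qa: "q = a - (5*L) *\<^sub>R u" and qa': "q' = a' - (5*L) *\<^sub>R u'"
    and lipq: "norm (q' - q) \<le> L * norm (u' - u)"
    and ww: "w = u + (1/2) *\<^sub>R ((u' - u) + \<gamma> *\<^sub>R (a' - a))"
    and mn: "g' - (5*L/2) * (norm w')\<^sup>2 + (1/(2*\<gamma>)) * (norm (u' - \<gamma> *\<^sub>R a' - w'))\<^sup>2
       \<le> g0 - (5*L/2) * (norm w)\<^sup>2 + (1/(2*\<gamma>)) * (norm (u' - \<gamma> *\<^sub>R a' - w))\<^sup>2"
    and cv: "Fu' + q' \<bullet> (u - u') \<le> Fu"
  shows "Fu' + q' \<bullet> (w' - u') + (1/(2*\<gamma>) - 5*L/2) * (norm (w' - u'))\<^sup>2 + g'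
     \<le> Fu + q \<bullet> (w - u) + (1/(2*\<gamma>) - 5*L/2) * (norm (w - u))\<^sup>2 + g0 - L * (norm (u' - u))\<^sup>2"
proof -
  have A2: "2 * (5*L/2) = 5*L" by simp
  have e1: "q' \<bullet> (w' - u') + (1/(2*\<gamma>) - 5*L/2) * (norm (w' - u'))\<^sup>2
    = (5*L/2) * (norm u')\<^sup>2 - (1/(2*\<gamma>)) * \<gamma>\<^sup>2 * (norm a')\<^sup>2 - (5*L/2) * (norm w')\<^sup>2 + (1/(2*\<gamma>)) * (norm (u' - \<gamma> *\<^sub>R a' - w'))\<^sup>2"
    using E1[OF g, of a' "5*L/2" u' w'] unfolding qa' A2 .
  have e2: "(5*L/2) * (norm (u + (u' - u)))\<^sup>2 - (1/(2*\<gamma>)) * \<gamma>\<^sup>2 * (norm (a + (a' - a)))\<^sup>2 - (5*L/2) * (norm (u + (1/2) *\<^sub>R ((u' - u) + \<gamma> *\<^sub>R (a' - a))))\<^sup>2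
     + (1/(2*\<gamma>)) * (norm (u + (u' - u) - \<gamma> *\<^sub>R (a + (a' - a)) - (u + (1/2) *\<^sub>R ((u' - u) + \<gamma> *\<^sub>R (a' - a)))))\<^sup>2
     - (a - (2*(5*L/2)) *\<^sub>R u) \<bullet> ((1/2) *\<^sub>R ((u' - u) + \<gamma> *\<^sub>R (a' - a)))
     - (1/(2*\<gamma>) - 5*L/2) * (norm ((1/2) *\<^sub>R ((u' - u) + \<gamma> *\<^sub>R (a' - a))))\<^sup>2
     - (a + (a' - a) - (2*(5*L/2)) *\<^sub>R (u + (u' - u))) \<bullet> (- (u' - u))
   = (\<gamma>/2) * (norm (a' - a))\<^sup>2 - (5*L/2) * (norm (u' - u))\<^sup>2"
    by (rule E2[OF g])
  have wu: "w - u = (1/2) *\<^sub>R ((u' - u) + \<gamma> *\<^sub>R (a' - a))" using ww by simp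
  have e2': "(5*L/2) * (norm u')\<^sup>2 - (1/(2*\<gamma>)) * \<gamma>\<^sup>2 * (norm a')\<^sup>2 - (5*L/2) * (norm w)\<^sup>2
     + (1/(2*\<gamma>)) * (norm (u' - \<gamma> *\<^sub>R a' - w))\<^sup>2
     - q \<bullet> (w - u) - (1/(2*\<gamma>) - 5*L/2) * (norm (w - u))\<^sup>2 + q' \<bullet> (u' - u)
   = (\<gamma>/2) * (norm (a' - a))\<^sup>2 - (5*L/2) * (norm (u' - u))\<^sup>2"
    using e2 unfolding A2 wu[symmetric] ww[symmetric] qa[symmetric] by (simp add: qa' inner_minus_right inner_diff_right)
  have ae: "a' - a = (q' - q) + (5*L) *\<^sub>R (u' - u)" using qa qa' by (simp add: algebra_simps)
  have "norm (a' - a) \<le> norm (q' - q) + norm ((5*L) *\<^sub>R (u' - u))"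
    unfolding ae by (rule norm_triangle_ineq)
  also have "\<dots> \<le> 6 * L * norm (u' - u)" using lipq Lp by simp
  finally have na: "norm (a' - a) \<le> 6 * L * norm (u' - u)" .
  then have "(norm (a' - a))\<^sup>2 \<le> (6 * L * norm (u' - u))\<^sup>2"
    by (intro power_mono) auto
  then have "(\<gamma>/2) * (norm (a' - a))\<^sup>2 \<le> (\<gamma>/2) * (36 * L\<^sup>2 * (norm (u' - u))\<^sup>2)"
    using g by (intro mult_left_mono) (auto simp: power_mult_distrib)
  moreover have "\<gamma> * L < 1/12" using gL Lp by (simp add: field_simps)
  then have "(\<gamma>/2) * (36 * L\<^sup>2 * (norm (u' - u))\<^sup>2) \<le> (3/2) * L * (norm (u' - u))\<^sup>2"
  proof -
    have "(\<gamma>*L) * (L * (norm (u' - u))\<^sup>2) \<le> (1/12) * (L * (norm (u' - u))\<^sup>2)"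
      using \<open>\<gamma> * L < 1/12\<close> Lp by (intro mult_right_mono) auto
    moreover have "(\<gamma>/2) * (36 * L\<^sup>2 * (norm (u' - u))\<^sup>2) = 18 * ((\<gamma>*L) * (L * (norm (u' - u))\<^sup>2))"
      by (simp add: power2_eq_square)
    ultimately show ?thesis by linarith
  qed
  ultimately have bnd: "(\<gamma>/2) * (norm (a' - a))\<^sup>2 \<le> (3/2) * L * (norm (u' - u))\<^sup>2" by linarith
  have cv': "Fu' - Fu \<le> q' \<bullet> (u' - u)" using cv by (simp add: inner_diff_right)
  show ?thesis using e1 e2' bnd cv' mn by linarith
qed

theorem corollary1:
  fixes F :: "'a::euclidean_space \<Rightarrow> real" and gradF :: "'a \<Rightarrow> 'a"
    and G :: "'a \<Rightarrow> ereal"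
    and L \<gamma> :: real and x y z :: "nat \<Rightarrow> 'a"
  assumes F_convex: "convex_on UNIV F"
    and F_grad: "\<And>u. (F has_derivative (\<lambda>h. gradF u \<bullet> h)) (at u)"
    and L_pos: "L > 0"
    and F_lip: "\<And>u v. norm (gradF u - gradF v) \<le> L * norm (u - v)"
    and G_proper: "proper_fun G"
    and G_lsc: "lsc_fun G"
    and G_prox: "\<And>w \<tau>. \<tau> > 0 \<Longrightarrow>
        Argmin (\<lambda>u. ereal \<tau> * G u + ereal ((1/2) * (norm (u - w))\<^sup>2)) \<noteq> {}"
    and coercive: "((\<lambda>u. ereal (F u) + G u) \<longlongrightarrow> \<infinity>) at_infinity"
    and gamma: "0 < \<gamma>" "\<gamma> < 1 / (12 * L)"
    and y_step: "\<And>t. y (Suc t) \<in> Argmin (\<lambda>v. F v + (5 * L / 2) * (norm v)\<^sup>2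
                      + (1 / (2 * \<gamma>)) * (norm (v - x t))\<^sup>2)"
    and z_step: "\<And>t. z (Suc t) \<in> Argmin (\<lambda>v. G v - ereal ((5 * L / 2) * (norm v)\<^sup>2)
                      + ereal ((1 / (2 * \<gamma>)) * (norm (2 *\<^sub>R y (Suc t) - x t - v))\<^sup>2))"
    and x_step: "\<And>t. x (Suc t) = x t + 2 *\<^sub>R (z (Suc t) - y (Suc t))"
  shows "bounded (range (\<lambda>t. (y (Suc t), z (Suc t), x (Suc t))))
    \<and> (\<forall>yb zb xb r. strict_mono r \<and>
          ((\<lambda>t. (y (Suc (r t)), z (Suc (r t)), x (Suc (r t)))) \<longlonglongrightarrow> (yb, zb, xb))
        \<longrightarrow> yb = zb \<and> 0 \<in> (\<lambda>v. gradF zb + v) ` limiting_subdiff G zb)"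
proof -
  have g0: "0 < \<gamma>" using gamma by simp
  have LL: "2 * (5 * L / 2) = 5 * L" by simp
  have K1: "x t = y (Suc t) + \<gamma> *\<^sub>R (gradF (y (Suc t)) + (5 * L) *\<^sub>R y (Suc t))" for t
    using yopt[OF F_grad g0 y_step[of t]] unfolding LL .
  obtain v0 where v0: "G v0 \<noteq> \<infinity>" using G_proper unfolding proper_fun_def by auto
  have Gnm: "G v \<noteq> -\<infinity>" for v using G_proper unfolding proper_fun_def by auto
  define p where "p t = 2 *\<^sub>R y (Suc t) - x t" for t
  have K2: "G (z (Suc t)) - ereal ((5 * L / 2) * (norm (z (Suc t)))\<^sup>2) + ereal ((1 / (2 * \<gamma>)) * (norm (p t - z (Suc t)))\<^sup>2)
     \<le> G v - ereal ((5 * L / 2) * (norm v)\<^sup>2) + ereal ((1 / (2 * \<gamma>)) * (norm (p t - v))\<^sup>2)" for t v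
    using z_step[of t] unfolding Argmin_def p_def by blast
  have Gfin: "\<bar>G (z (Suc t))\<bar> \<noteq> \<infinity>" for t
  proof
    assume "\<bar>G (z (Suc t))\<bar> = \<infinity>"
    then have "G (z (Suc t)) = \<infinity>" using Gnm by (cases "G (z (Suc t))") auto
    then show False using K2[of t v0] v0 Gnm[of v0] by (cases "G v0") auto
  qed
  define g where "g t = real_of_ereal (G (z (Suc t)))" for t
  have Gg: "G (z (Suc t)) = ereal (g t)" for t using Gfin[of t] unfolding g_def by (simp add: ereal_real)
  have K2r: "g t - (5 * L / 2) * (norm (z (Suc t)))\<^sup>2 + (1 / (2 * \<gamma>)) * (norm (p t - z (Suc t)))\<^sup>2
     \<le> gv - (5 * L / 2) * (norm v)\<^sup>2 + (1 / (2 * \<gamma>)) * (norm (p t - v))\<^sup>2" if "G v = ereal gv" for t v gv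
    using K2[of t v] that Gg[of t] by simp
  define M where "M t = F (y (Suc t)) + gradF (y (Suc t)) \<bullet> (z (Suc t) - y (Suc t))
     + (1/(2*\<gamma>) - 5*L/2) * (norm (z (Suc t) - y (Suc t)))\<^sup>2 + g t" for t
  define a where "a t = gradF (y (Suc t)) + (5 * L) *\<^sub>R y (Suc t)" for t
  have desc: "M (Suc t) \<le> M t - L * (norm (y (Suc (Suc t)) - y (Suc t)))\<^sup>2" for t
  proof -
    have xx: "x (Suc t) - x t = 2 *\<^sub>R (z (Suc t) - y (Suc t))" using x_step[of t] by simp
    have ww: "z (Suc t) = y (Suc t) + (1/2) *\<^sub>R ((y (Suc (Suc t)) - y (Suc t)) + \<gamma> *\<^sub>R (a (Suc t) - a t))"
    proof -
      have "2 *\<^sub>R (z (Suc t) - y (Suc t)) = (y (Suc (Suc t)) - y (Suc t)) + \<gamma> *\<^sub>R (a (Suc t) - a t)"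
        using xx K1[of t] K1[of "Suc t"] unfolding a_def by (simp add: algebra_simps)
      then have "z (Suc t) - y (Suc t) = (1/2) *\<^sub>R ((y (Suc (Suc t)) - y (Suc t)) + \<gamma> *\<^sub>R (a (Suc t) - a t))"
        by (metis (no_types, lifting) scaleR_scaleR divide_self_if mult.commute nonzero_divide_eq_eq scaleR_one zero_neq_numeral times_divide_eq_right)
      then show ?thesis by (simp add: algebra_simps)
    qed
    have pp: "p (Suc t) = y (Suc (Suc t)) - \<gamma> *\<^sub>R a (Suc t)"
      using K1[of "Suc t"] unfolding p_def a_def by (simp add: algebra_simps scaleR_2)
    have mn: "g (Suc t) - (5*L/2) * (norm (z (Suc (Suc t))))\<^sup>2 + (1/(2*\<gamma>)) * (norm (y (Suc (Suc t)) - \<gamma> *\<^sub>R a (Suc t) - z (Suc (Suc t))))\<^sup>2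
       \<le> g t - (5*L/2) * (norm (z (Suc t)))\<^sup>2 + (1/(2*\<gamma>)) * (norm (y (Suc (Suc t)) - \<gamma> *\<^sub>R a (Suc t) - z (Suc t)))\<^sup>2"
      using K2r[of "z (Suc t)" "g t" "Suc t"] Gg[of t] unfolding pp by simp
    have cv: "F (y (Suc (Suc t))) + gradF (y (Suc (Suc t))) \<bullet> (y (Suc t) - y (Suc (Suc t))) \<le> F (y (Suc t))"
      by (rule grad_ineq[OF F_convex F_grad])
    show ?thesis unfolding M_def
      by (rule desc_step[OF g0 L_pos gamma(2) _ _ F_lip ww mn cv]) (simp_all add: a_def)
  qed
  have Fcont: "continuous_on UNIV F"
    using F_grad by (meson continuous_at_imp_continuous_on has_derivative_continuous)
  define H where "H v = ereal (F v) + G v" for v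
  have Hnm: "H v \<noteq> -\<infinity>" for v using Gnm[of v] unfolding H_def by (cases "G v") auto
  obtain m :: real where m: "\<And>v. ereal m \<le> H v"
    using coercive_bdd_below[of H] lsc_sum_nhds[OF G_lsc Gnm Fcont] Hnm coercive unfolding H_def by blast
  have Mlow: "F (z (Suc t)) + g t + (1/(2*\<gamma>) - 7*L/2) * (norm (z (Suc t) - y (Suc t)))\<^sup>2 \<le> M t" for t
  proof -
    have "F (z (Suc t)) \<le> F (y (Suc t)) + gradF (y (Suc t)) \<bullet> (z (Suc t) - y (Suc t)) + L * (norm (z (Suc t) - y (Suc t)))\<^sup>2"
      by (rule upper_bound[OF F_convex F_grad F_lip])
    then show ?thesis unfolding M_def by (simp add: algebra_simps)
  qed
  have c0: "1/(2*\<gamma>) - 7*L/2 > 0"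
  proof -
    have "12 * L * \<gamma> < 1" using gamma L_pos by (simp add: field_simps)
    then have "7 * L * \<gamma> < 1" using L_pos g0 by simp
    then show ?thesis using g0 by (simp add: field_simps)
  qed
  have FGm: "m \<le> F (z (Suc t)) + g t" for t using m[of "z (Suc t)"] unfolding H_def Gg by simp
  have decM: "decseq M" using desc L_pos
    by (intro decseq_SucI) (smt (verit, best) mult_nonneg_nonneg zero_le_power2)
  have Mbd: "m \<le> M t" for t
    using Mlow[of t] FGm[of t] c0 by (smt (verit, best) mult_nonneg_nonneg zero_le_power2)
  have M0: "M t \<le> M 0" for t using decM by (simp add: decseq_def)
  define K where "K = (M 0 - m) / (1/(2*\<gamma>) - 7*L/2)"
  have zyK: "(norm (z (Suc t) - y (Suc t)))\<^sup>2 \<le> K" for t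
  proof -
    have "(1/(2*\<gamma>) - 7*L/2) * (norm (z (Suc t) - y (Suc t)))\<^sup>2 \<le> M 0 - m"
      using Mlow[of t] FGm[of t] M0[of t] by linarith
    then show ?thesis unfolding K_def using c0 by (simp add: field_simps)
  qed
  have zy1: "norm (z (Suc t) - y (Suc t)) \<le> 1 + K" for t
  proof (cases "norm (z (Suc t) - y (Suc t)) \<le> 1")
    case True then show ?thesis using zyK[of t] by (smt (verit) zero_le_power2)
  next
    case False
    have "norm (z (Suc t) - y (Suc t)) * 1 \<le> norm (z (Suc t) - y (Suc t)) * norm (z (Suc t) - y (Suc t))"
      using False by (intro mult_left_mono) auto
    then have "norm (z (Suc t) - y (Suc t)) \<le> (norm (z (Suc t) - y (Suc t)))\<^sup>2"
      by (simp add: power2_eq_square)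
    then show ?thesis using zyK[of t] by linarith
  qed
  obtain R where R: "\<And>v. R \<le> norm v \<Longrightarrow> ereal (M 0) < H v"
    using order_tendstoD(1)[OF coercive[folded H_def], of "ereal (M 0)"] unfolding eventually_at_infinity by auto
  have zR: "norm (z (Suc t)) \<le> R" for t
  proof (rule ccontr)
    assume "\<not> ?thesis"
    then have "ereal (M 0) < H (z (Suc t))" using R by simp
    moreover have "F (z (Suc t)) + g t \<le> M 0"
      using Mlow[of t] M0[of t] c0 by (smt (verit, best) mult_nonneg_nonneg zero_le_power2)
    ultimately show False unfolding H_def Gg by simp
  qed
  define BY where "BY = R + 1 + K"
  have yB: "norm (y (Suc t)) \<le> BY" for t
  proof -
    have "norm (y (Suc t)) \<le> norm (z (Suc t)) + norm (z (Suc t) - y (Suc t))"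
      using norm_triangle_ineq4[of "z (Suc t)" "z (Suc t) - y (Suc t)"] by simp
    then show ?thesis using zR[of t] zy1[of t] unfolding BY_def by linarith
  qed
  have gradB: "norm (gradF v) \<le> norm (gradF 0) + L * norm v" for v
    using F_lip[of v 0] norm_triangle_ineq2[of "gradF v" "gradF 0"] by simp
  define BX where "BX = BY + \<gamma> * (norm (gradF 0) + L * BY + 5 * L * BY)"
  have xB: "norm (x t) \<le> BX" for t
  proof -
    have "norm (x t) \<le> norm (y (Suc t)) + \<gamma> * (norm (gradF (y (Suc t))) + 5 * L * norm (y (Suc t)))"
      unfolding K1[of t] using g0 L_pos
      by (smt (verit) norm_scaleR norm_triangle_ineq abs_of_pos mult_left_mono norm_ge_zero)
    also have "\<dots> \<le> BX" unfolding BX_def using yB[of t] gradB[of "y (Suc t)"] g0 L_pos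
      by (smt (verit, best) mult_left_mono)
    finally show ?thesis .
  qed
  have bnd: "bounded (range (\<lambda>t. (y (Suc t), z (Suc t), x (Suc t))))"
  proof -
    have "range (\<lambda>t. (y (Suc t), z (Suc t), x (Suc t))) \<subseteq> cball 0 BY \<times> (cball 0 R \<times> cball 0 BX)"
      using yB zR xB by auto
    moreover have "bounded (cball (0::'a) BY \<times> (cball (0::'a) R \<times> cball (0::'a) BX))"
      by (intro bounded_Times bounded_cball)
    ultimately show ?thesis using bounded_subset by blast
  qed
  obtain Ml where Ml: "M \<longlonglongrightarrow> Ml" using decseq_convergent[OF decM, of m] Mbd by blast
  have dM: "(\<lambda>t. M t - M (Suc t)) \<longlonglongrightarrow> 0"
    using tendsto_diff[OF Ml LIMSEQ_Suc[OF Ml]] by simp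
  have d2: "(\<lambda>t. (norm (y (Suc (Suc t)) - y (Suc t)))\<^sup>2) \<longlonglongrightarrow> 0"
  proof (rule tendsto_sandwich[of "\<lambda>_. 0" _ _ "\<lambda>t. (M t - M (Suc t)) / L"])
    show "\<forall>\<^sub>F t in sequentially. 0 \<le> (norm (y (Suc (Suc t)) - y (Suc t)))\<^sup>2" by simp
    show "\<forall>\<^sub>F t in sequentially. (norm (y (Suc (Suc t)) - y (Suc t)))\<^sup>2 \<le> (M t - M (Suc t)) / L"
      using desc L_pos by (simp add: field_simps mult.commute)
    show "(\<lambda>_. 0) \<longlonglongrightarrow> (0::real)" by simp
    show "(\<lambda>t. (M t - M (Suc t)) / L) \<longlonglongrightarrow> 0" using tendsto_divide_zero[OF dM] .
  qed
  have dn: "(\<lambda>t. norm (y (Suc (Suc t)) - y (Suc t))) \<longlonglongrightarrow> 0"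
    using tendsto_real_sqrt[OF d2] by simp
  have dx: "(\<lambda>t. x (Suc t) - x t) \<longlonglongrightarrow> 0"
  proof (rule Lim_null_comparison[OF _ tendsto_mult_right_zero[OF dn, of "1 + 6 * \<gamma> * L"]])
    show "\<forall>\<^sub>F t in sequentially. norm (x (Suc t) - x t) \<le> (1 + 6 * \<gamma> * L) * norm (y (Suc (Suc t)) - y (Suc t))"
    proof (intro always_eventually allI)
      fix t
      define d where "d = y (Suc (Suc t)) - y (Suc t)"
      have xe: "x (Suc t) - x t = d + \<gamma> *\<^sub>R ((gradF (y (Suc (Suc t))) - gradF (y (Suc t))) + (5 * L) *\<^sub>R d)"
        unfolding K1[of t] K1[of "Suc t"] d_def by (simp add: algebra_simps)
      have "norm (x (Suc t) - x t) \<le> norm d + \<gamma> * norm ((gradF (y (Suc (Suc t))) - gradF (y (Suc t))) + (5 * L) *\<^sub>R d)"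
        unfolding xe using g0 by (metis abs_of_pos norm_scaleR norm_triangle_ineq)
      also have "\<dots> \<le> norm d + \<gamma> * (L * norm d + 5 * L * norm d)"
      proof -
        have "norm ((gradF (y (Suc (Suc t))) - gradF (y (Suc t))) + (5 * L) *\<^sub>R d) \<le> L * norm d + 5 * L * norm d"
          using norm_triangle_ineq[of "gradF (y (Suc (Suc t))) - gradF (y (Suc t))" "(5 * L) *\<^sub>R d"]
            F_lip[of "y (Suc (Suc t))" "y (Suc t)"] L_pos unfolding d_def by simp
        then show ?thesis using g0 by (simp add: mult_left_mono)
      qed
      also have "\<dots> = (1 + 6 * \<gamma> * L) * norm d" by (simp add: algebra_simps)
      finally show "norm (x (Suc t) - x t) \<le> (1 + 6 * \<gamma> * L) * norm (y (Suc (Suc t)) - y (Suc t))"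
        unfolding d_def .
    qed
  qed
  have zy0: "(\<lambda>t. z (Suc t) - y (Suc t)) \<longlonglongrightarrow> 0"
  proof -
    have "z (Suc t) - y (Suc t) = (1/2) *\<^sub>R (x (Suc t) - x t)" for t
      using x_step[of t] by simp
    then show ?thesis using tendsto_scaleR[OF tendsto_const dx, of "1/2"] by simp
  qed
  have conv: "yb = zb \<and> 0 \<in> (\<lambda>v. gradF zb + v) ` limiting_subdiff G zb"
    if r: "strict_mono r" and lim: "(\<lambda>t. (y (Suc (r t)), z (Suc (r t)), x (Suc (r t)))) \<longlonglongrightarrow> (yb, zb, xb)"
    for yb zb xb r
  proof -
    have Yr: "(\<lambda>t. y (Suc (r t))) \<longlonglongrightarrow> yb" using tendsto_fst[OF lim] by simp
    have Zr: "(\<lambda>t. z (Suc (r t))) \<longlonglongrightarrow> zb" using tendsto_fst[OF tendsto_snd[OF lim]] by simp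
    have Xr: "(\<lambda>t. x (Suc (r t))) \<longlonglongrightarrow> xb" using tendsto_snd[OF tendsto_snd[OF lim]] by simp
    have "(\<lambda>t. z (Suc (r t)) - y (Suc (r t))) \<longlonglongrightarrow> 0" using LIMSEQ_subseq_LIMSEQ[OF zy0 r] by (simp add: o_def)
    moreover have "(\<lambda>t. z (Suc (r t)) - y (Suc (r t))) \<longlonglongrightarrow> zb - yb" by (intro tendsto_diff Zr Yr)
    ultimately have yz: "yb = zb" using LIMSEQ_unique by fastforce
    have dxr: "(\<lambda>t. x (Suc (r t)) - x (r t)) \<longlonglongrightarrow> 0" using LIMSEQ_subseq_LIMSEQ[OF dx r] by (simp add: o_def)
    have Xr0: "(\<lambda>t. x (r t)) \<longlonglongrightarrow> xb" using tendsto_diff[OF Xr dxr] by simp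
    have gradc: "(\<lambda>t. gradF (y (Suc (r t)))) \<longlonglongrightarrow> gradF yb"
    proof -
      have "(\<lambda>t. y (Suc (r t)) - yb) \<longlonglongrightarrow> 0" using Yr by (simp add: LIM_zero_iff)
      then have "(\<lambda>t. norm (y (Suc (r t)) - yb)) \<longlonglongrightarrow> 0" by (simp add: tendsto_norm_zero_iff)
      then have "(\<lambda>t. L * norm (y (Suc (r t)) - yb)) \<longlonglongrightarrow> 0"
        using tendsto_mult[OF tendsto_const, of _ 0 _ L] by simp
      then have "(\<lambda>t. gradF (y (Suc (r t))) - gradF yb) \<longlonglongrightarrow> 0"
        by (rule Lim_null_comparison[rotated]) (simp add: F_lip)
      then show ?thesis by (simp add: LIM_zero_iff)
    qed
    have "(\<lambda>t. x (r t)) \<longlonglongrightarrow> yb + \<gamma> *\<^sub>R (gradF yb + (5 * L) *\<^sub>R yb)"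
      unfolding K1 by (intro tendsto_intros Yr gradc)
    then have xbeq: "xb = yb + \<gamma> *\<^sub>R (gradF yb + (5 * L) *\<^sub>R yb)" using Xr0 LIMSEQ_unique by blast
    define vs where "vs t = (2 * (5*L/2)) *\<^sub>R z (Suc (r t)) + (2 * (1/(2*\<gamma>))) *\<^sub>R (p (r t) - z (Suc (r t)))" for t
    have vsin: "vs t \<in> frechet_subdiff G (z (Suc (r t)))" for t
      unfolding vs_def by (rule frechet_min[OF Gfin K2])
    have pr: "(\<lambda>t. p (r t)) \<longlonglongrightarrow> 2 *\<^sub>R yb - xb" unfolding p_def by (intro tendsto_intros Yr Xr0)
    have "vs \<longlonglongrightarrow> (2 * (5*L/2)) *\<^sub>R zb + (2 * (1/(2*\<gamma>))) *\<^sub>R ((2 *\<^sub>R yb - xb) - zb)"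
      unfolding vs_def by (intro tendsto_intros Zr pr)
    moreover have "(2 * (5*L/2)) *\<^sub>R zb + (2 * (1/(2*\<gamma>))) *\<^sub>R ((2 *\<^sub>R yb - xb) - zb) = - gradF zb"
    proof -
      have "(2 *\<^sub>R yb - xb) - zb = - \<gamma> *\<^sub>R (gradF yb + (5 * L) *\<^sub>R yb)"
        using xbeq yz by (simp add: algebra_simps scaleR_2)
      then have "(2 * (1/(2*\<gamma>))) *\<^sub>R ((2 *\<^sub>R yb - xb) - zb) = - (gradF yb + (5 * L) *\<^sub>R yb)"
        using g0 by simp
      then show ?thesis using yz by simp
    qed
    ultimately have vslim: "vs \<longlonglongrightarrow> - gradF zb" by simp
    have Fc: "(\<lambda>t. F (z (Suc (r t)))) \<longlonglongrightarrow> F zb"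
      using continuous_on_tendsto_compose[OF Fcont Zr] by simp
    have gup: "g (r t) \<le> M 0 - F (z (Suc (r t)))" for t
      using Mlow[of "r t"] M0[of "r t"] c0 by (smt (verit, best) mult_nonneg_nonneg zero_le_power2)
    have Gzb_le: "G zb \<le> ereal (M 0 - F zb + 1)"
    proof (rule ccontr)
      assume "\<not> ?thesis"
      then have "ereal (M 0 - F zb + 1) < G zb" by simp
      from nhds_seq[OF lsc_nhds[OF G_lsc this] Zr]
      have ev1: "\<forall>\<^sub>F t in sequentially. ereal (M 0 - F zb + 1) < G (z (Suc (r t)))" .
      have ev2: "\<forall>\<^sub>F t in sequentially. F zb - 1 < F (z (Suc (r t)))"
        using order_tendstoD(1)[OF Fc, of "F zb - 1"] by simp
      obtain t where "ereal (M 0 - F zb + 1) < G (z (Suc (r t)))" "F zb - 1 < F (z (Suc (r t)))"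
        using eventually_happens[OF eventually_conj[OF ev1 ev2]] by auto
      then show False using gup[of t] Gg[of "r t"] by simp
    qed
    obtain gb where gb: "G zb = ereal gb" using Gzb_le Gnm[of zb] by (cases "G zb") auto
    have gconv: "(\<lambda>t. g (r t)) \<longlonglongrightarrow> gb"
      unfolding tendsto_iff
    proof (intro allI impI)
      fix e :: real assume e: "e > 0"
      have "ereal (gb - e) < G zb" using gb e by simp
      from nhds_seq[OF lsc_nhds[OF G_lsc this] Zr]
      have low: "\<forall>\<^sub>F t in sequentially. gb - e < g (r t)" by (simp add: Gg)
      define h where "h t = (5*L/2) * (norm (z (Suc (r t))))\<^sup>2 - (1/(2*\<gamma>)) * (norm (p (r t) - z (Suc (r t))))\<^sup>2
         - (5*L/2) * (norm zb)\<^sup>2 + (1/(2*\<gamma>)) * (norm (p (r t) - zb))\<^sup>2" for t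
      have hup: "g (r t) \<le> gb + h t" for t using K2r[OF gb, of "r t"] unfolding h_def by simp
      have "h \<longlonglongrightarrow> (5*L/2) * (norm zb)\<^sup>2 - (1/(2*\<gamma>)) * (norm ((2 *\<^sub>R yb - xb) - zb))\<^sup>2
         - (5*L/2) * (norm zb)\<^sup>2 + (1/(2*\<gamma>)) * (norm ((2 *\<^sub>R yb - xb) - zb))\<^sup>2"
        unfolding h_def by (intro tendsto_intros Zr pr)
      then have h0: "h \<longlonglongrightarrow> 0" by simp
      have up: "\<forall>\<^sub>F t in sequentially. h t < e" using order_tendstoD(2)[OF h0 e] .
      show "\<forall>\<^sub>F t in sequentially. dist (g (r t)) gb < e"
      proof (rule eventually_mono[OF eventually_conj[OF low up]])
        fix t assume "gb - e < g (r t) \<and> h t < e"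
        then show "dist (g (r t)) gb < e" using hup[of t] by (simp add: dist_real_def abs_less_iff)
      qed
    qed
    have "\<exists>xs vs'. xs \<longlonglongrightarrow> zb \<and> (\<lambda>t. G (xs t)) \<longlonglongrightarrow> G zb \<and> vs' \<longlonglongrightarrow> - gradF zb \<and> (\<forall>t. vs' t \<in> frechet_subdiff G (xs t))"
      by (rule exI[of _ "\<lambda>t. z (Suc (r t))"], rule exI[of _ vs]) (use Zr gconv vslim vsin in \<open>simp add: Gg gb\<close>)
    then have "- gradF zb \<in> limiting_subdiff G zb"
      unfolding limiting_subdiff_def by simp
    then have "0 \<in> (\<lambda>v. gradF zb + v) ` limiting_subdiff G zb" by (rule rev_image_eqI) simp
    then show ?thesis using yz by simp
  qed
  show ?thesis using bnd conv by blast
qed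

end
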